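(* Let $\mathcal A_+,\mathcal A_-\subseteq\mathbb Z^n$ be disjoint finite sets such that $(\mathcal A_+,\mathcal A_-)$ is full dimensional and nonseparable, with critical system $F$. Let $\mathcal A=\mathcal A_+\cup\mathcal A_-$, $c\in\mathbb R^{\mathcal A}_{>0}$, and $h:\mathcal A\to\mathbb Z$ a height function lifting $\mathcal A_-$, and set $G(t,x):=F(c\star t^h,x)$ for $(t,x)\in\mathbb R^{n+1}_{>0}$. If $G(t,x)=0$ for some $(t,x)\in\mathbb R^{n+1}_{>0}$, then the Jacobian matrix $J_G(t,x)$ (with respect to $(t,x)$) satisfies $\det J_G(t,x)\neq0$. In particular, for $f\in\mathcal S(\mathcal A_+,\mathcal A_-)$ with nonsigned coefficients $c$, the unique element $t_*$ of $S=\{t>0:G(t,x)=0\text{ for some }x\in\mathbb R^n_{>0}\}$ together with the corresponding $x$ is a nonsingular solution of $G=0$.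
   Context: For $c\in\mathbb R^{\mathcal A}_{>0}$ let $f_c(x)=\sum_{a\in\mathcal A_+}c_ax^a-\sum_{b\in\mathcal A_-}c_bx^b$; $\mathcal S(\mathcal A_+,\mathcal A_-)$ is the set of these. The critical system is $F(c,x)=(f_c(x),x_1\partial_{x_1}f_c(x),\dots,x_n\partial_{x_n}f_c(x))$. Full dimensional: $\dim\operatorname{conv}(\mathcal A)=n$. $\mathcal F(\mathcal A_+)$ is the common refinement of all regular polyhedral subdivisions of $\mathcal A_+$, $\mathcal F_n(\mathcal A_+)$ its $n$-cells; $(\mathcal A_+,\mathcal A_-)$ is nonseparable if $\mathcal A_-\subseteq\operatorname{relint}\operatorname{conv}(\mathcal A_+)$ and some $D\in\mathcal F_n(\mathcal A_+)$ contains $\mathcal A_-$. A height function $h$ lifts $\mathcal A_-$ if $h(a)>0$ for $a\in\mathcal A_-$ and $h(a)=0$ for $a\in\mathcal A_+$; $c\star t^h=(c_at^{h(a)})_a$. (For nonempty $\mathcal A_-$ under these hypotheses, $S$ is known to be a singleton.) *)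

theory Defs
  imports "HOL-Analysis.Analysis"
begin

text \<open>Exponent vectors are points of real^'n with integer coordinates; n = CARD('n).\<close>

definition int_points :: "(real^'n) set \<Rightarrow> bool" where
  "int_points A \<longleftrightarrow> (\<forall>a\<in>A. \<forall>i. a $ i \<in> \<int>)"

definition monom :: "real^'n \<Rightarrow> real^'n \<Rightarrow> real" where
  "monom x a = (\<Prod>i\<in>UNIV. (x $ i) powr (a $ i))"

definition fsig :: "(real^'n) set \<Rightarrow> (real^'n) set \<Rightarrow> (real^'n \<Rightarrow> real) \<Rightarrow> real^'n \<Rightarrow> real" where
  "fsig Ap Am c x = (\<Sum>a\<in>Ap. c a * monom x a) - (\<Sum>b\<in>Am. c b * monom x b)"

definition partial :: "(real^'m \<Rightarrow> real) \<Rightarrow> 'm \<Rightarrow> real^'m \<Rightarrow> real" where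
  "partial f i x = deriv (\<lambda>s. f (\<chi> j. if j = i then s else x $ j)) (x $ i)"

text \<open>Critical system F(c,x) = (f_c(x), x_1 d_1 f_c(x), ..., x_n d_n f_c(x));
  index None is the component f_c, index Some i is x_i d_i f_c.\<close>
definition crit_sys :: "(real^'n) set \<Rightarrow> (real^'n) set \<Rightarrow> (real^'n \<Rightarrow> real) \<Rightarrow> real^'n \<Rightarrow> real^('n option)" where
  "crit_sys Ap Am c x = (\<chi> k. case k of None \<Rightarrow> fsig Ap Am c x
                              | Some i \<Rightarrow> x $ i * partial (fsig Ap Am c) i x)"

definition full_dimensional :: "(real^'n) set \<Rightarrow> (real^'n) set \<Rightarrow> bool" where
  "full_dimensional Ap Am \<longleftrightarrow> aff_dim (convex hull (Ap \<union> Am)) = int CARD('n)"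

text \<open>Regular polyhedral subdivision of a point configuration A induced by a height w:
  its cells are convex hulls of the lower faces of the lifted configuration, i.e. of the
  sets of points minimising w(a) + u.a for some u.\<close>
definition lower_face :: "(real^'n) set \<Rightarrow> (real^'n \<Rightarrow> real) \<Rightarrow> real^'n \<Rightarrow> (real^'n) set" where
  "lower_face A w u = {a\<in>A. \<forall>b\<in>A. w a + u \<bullet> a \<le> w b + u \<bullet> b}"

definition reg_subdiv_ncells :: "(real^'n) set \<Rightarrow> (real^'n \<Rightarrow> real) \<Rightarrow> (real^'n) set set" where
  "reg_subdiv_ncells A w =
     {convex hull (lower_face A w u) | u. aff_dim (convex hull (lower_face A w u)) = int CARD('n)}"

text \<open>n-cells of the common refinement F(A) of all regular polyhedral subdivisions of A:
  the n-dimensional intersections of one n-cell from each regular subdivision.\<close>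
definition refinement_ncells :: "(real^'n) set \<Rightarrow> (real^'n) set set" where
  "refinement_ncells A =
     {D. \<exists>C. (\<forall>w. C w \<in> reg_subdiv_ncells A w) \<and> D = (\<Inter>w. C w)
            \<and> aff_dim D = int CARD('n)}"

definition nonseparable :: "(real^'n) set \<Rightarrow> (real^'n) set \<Rightarrow> bool" where
  "nonseparable Ap Am \<longleftrightarrow> Am \<subseteq> rel_interior (convex hull Ap)
      \<and> (\<exists>D\<in>refinement_ncells Ap. Am \<subseteq> D)"

definition lifts :: "(real^'n) set \<Rightarrow> (real^'n) set \<Rightarrow> (real^'n \<Rightarrow> int) \<Rightarrow> bool" where
  "lifts Ap Am h \<longleftrightarrow> (\<forall>a\<in>Am. h a > 0) \<and> (\<forall>a\<in>Ap. h a = 0)"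

text \<open>G(t,x) = F(c * t^h, x); a point p of R^{n+1} has t = p$None and x_i = p$(Some i).\<close>
definition Gsys :: "(real^'n) set \<Rightarrow> (real^'n) set \<Rightarrow> (real^'n \<Rightarrow> real) \<Rightarrow> (real^'n \<Rightarrow> int)
     \<Rightarrow> real^('n option) \<Rightarrow> real^('n option)" where
  "Gsys Ap Am c h p = crit_sys Ap Am (\<lambda>a. c a * (p $ None) powi (h a)) (\<chi> i. p $ Some i)"

definition jacobian_mat :: "(real^'m \<Rightarrow> real^'m) \<Rightarrow> real^'m \<Rightarrow> real^'m^'m" where
  "jacobian_mat G p = (\<chi> k l. partial (\<lambda>q. G q $ k) l p)"

end

theory Submission
  imports Defs
begin

lemma det_nz_of_ker:
  fixes A :: "real^'m^'m"
  assumes "\<And>v. A *v v = 0 \<Longrightarrow> v = 0"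
  shows "det A \<noteq> 0"
  using assms matrix_left_invertible_ker invertible_left_inverse invertible_det_nz by metis

lemma phi_convex:
  fixes u u0 :: "real^'n"
  assumes "convex S"
  shows "convex_on S (\<lambda>y. (u \<bullet> y)^2 + u0 \<bullet> y)"
proof (rule convex_onI)
  fix t :: real and x y assume t: "0 < t" "t < 1"
  have e: "u \<bullet> ((1 - t) *\<^sub>R x + t *\<^sub>R y) = (1-t) * (u \<bullet> x) + t * (u \<bullet> y)"
    by (simp add: inner_add_right)
  have e2: "u0 \<bullet> ((1 - t) *\<^sub>R x + t *\<^sub>R y) = (1-t) * (u0 \<bullet> x) + t * (u0 \<bullet> y)"
    by (simp add: inner_add_right)
  have "((1-t) * (u \<bullet> x) + t * (u \<bullet> y))^2 \<le> (1-t) * (u \<bullet> x)^2 + t * (u \<bullet> y)^2"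
  proof -
    have "(1-t) * (u \<bullet> x)^2 + t * (u \<bullet> y)^2 - ((1-t) * (u \<bullet> x) + t * (u \<bullet> y))^2
          = t * (1-t) * ((u \<bullet> x) - (u \<bullet> y))^2" by (simp add: algebra_simps power2_eq_square)
    moreover have "t * (1-t) * ((u \<bullet> x) - (u \<bullet> y))^2 \<ge> 0" using t by simp
    ultimately show ?thesis by linarith
  qed
  then show "(u \<bullet> ((1 - t) *\<^sub>R x + t *\<^sub>R y))\<^sup>2 + u0 \<bullet> ((1 - t) *\<^sub>R x + t *\<^sub>R y)
         \<le> (1 - t) * ((u \<bullet> x)\<^sup>2 + u0 \<bullet> x) + t * ((u \<bullet> y)\<^sup>2 + u0 \<bullet> y)"
    unfolding e e2 by (simp add: algebra_simps)
next
  show "convex S" by (rule assms)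
qed

lemma quad_pos:
  fixes Ap Am :: "(real^'n) set" and K :: "real^'n \<Rightarrow> real" and u :: "real^'n"
  assumes fin: "finite Ap" "finite Am" and ne: "Am \<noteq> {}"
    and Kpos: "\<forall>a\<in>Ap \<union> Am. K a > 0"
    and sK: "sum K Ap = sum K Am"
    and sV: "(\<Sum>a\<in>Ap. K a *\<^sub>R a) = (\<Sum>b\<in>Am. K b *\<^sub>R b)"
    and int: "Am \<subseteq> interior (convex hull Ap)"
    and ns: "nonseparable Ap Am" and u: "u \<noteq> 0"
  shows "(\<Sum>a\<in>Ap. K a * (u \<bullet> a)^2) - (\<Sum>b\<in>Am. K b * (u \<bullet> b)^2) > 0"
proof -
  obtain D where D: "D \<in> refinement_ncells Ap" "Am \<subseteq> D" using ns unfolding nonseparable_def by blast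
  then obtain C where C: "\<forall>w. C w \<in> reg_subdiv_ncells Ap w" "D = (\<Inter>w. C w)"
    unfolding refinement_ncells_def by blast
  define w0 where "w0 = (\<lambda>a::real^'n. (u \<bullet> a)^2)"
  obtain u0 where u0: "C w0 = convex hull (lower_face Ap w0 u0)"
    using C(1)[rule_format, of w0] unfolding reg_subdiv_ncells_def by blast
  define L where "L = lower_face Ap w0 u0"
  have AmL: "Am \<subseteq> convex hull L" using D(2) C(2) u0 L_def by blast
  have "L \<noteq> {}" using AmL ne by auto
  then obtain a0 where a0: "a0 \<in> L" by blast
  define \<kappa> where "\<kappa> = w0 a0 + u0 \<bullet> a0"
  define \<phi> where "\<phi> = (\<lambda>y. (u \<bullet> y)^2 + u0 \<bullet> y)"
  have hAp: "\<forall>a\<in>Ap. \<phi> a \<ge> \<kappa>" using a0 unfolding L_def lower_face_def \<kappa>_def \<phi>_def w0_def by auto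
  have hL: "\<forall>a\<in>L. \<phi> a \<le> \<kappa>" using a0 unfolding L_def lower_face_def \<kappa>_def \<phi>_def w0_def by auto
  have hAm: "\<forall>b\<in>Am. \<phi> b \<le> \<kappa>"
    using convex_on_convex_hull_bound[OF _ hL] phi_convex[of "convex hull L" u u0] AmL
    unfolding \<phi>_def by auto
  define S where "S = (\<Sum>a\<in>Ap. K a * (\<phi> a - \<kappa>))"
  define T where "T = (\<Sum>b\<in>Am. K b * (\<kappa> - \<phi> b))"
  have S0: "S \<ge> 0" unfolding S_def using hAp Kpos by (intro sum_nonneg) (metis UnI1 diff_ge_0_iff_ge less_le mult_nonneg_nonneg)
  have T0: "T \<ge> 0" unfolding T_def using hAm Kpos by (intro sum_nonneg) (metis UnI2 diff_ge_0_iff_ge less_le mult_nonneg_nonneg)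
  have iA: "(\<Sum>a\<in>Ap. K a * (u0 \<bullet> a)) = u0 \<bullet> (\<Sum>a\<in>Ap. K a *\<^sub>R a)"
    by (simp add: inner_sum_right)
  have iB: "(\<Sum>a\<in>Am. K a * (u0 \<bullet> a)) = u0 \<bullet> (\<Sum>a\<in>Am. K a *\<^sub>R a)"
    by (simp add: inner_sum_right)
  have Sx: "S = (\<Sum>a\<in>Ap. K a * (u \<bullet> a)^2) + (\<Sum>a\<in>Ap. K a * (u0 \<bullet> a)) - \<kappa> * sum K Ap"
    unfolding S_def \<phi>_def by (simp add: algebra_simps sum.distrib sum_subtractf sum_distrib_left)
  have Tx: "T = \<kappa> * sum K Am - (\<Sum>a\<in>Am. K a * (u \<bullet> a)^2) - (\<Sum>a\<in>Am. K a * (u0 \<bullet> a))"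
    unfolding T_def \<phi>_def by (simp add: algebra_simps sum.distrib sum_subtractf sum_distrib_left)
  have Q: "(\<Sum>a\<in>Ap. K a * (u \<bullet> a)^2) - (\<Sum>b\<in>Am. K b * (u \<bullet> b)^2) = S + T"
    unfolding Sx Tx iA iB sK sV by simp
  show ?thesis
  proof (rule ccontr)
    assume "\<not> ?thesis"
    then have "S = 0" "T = 0" using Q S0 T0 by linarith+
    have eqA: "\<forall>a\<in>Ap. \<phi> a = \<kappa>"
    proof
      fix a assume a: "a \<in> Ap"
      have nn: "\<And>x. x \<in> Ap \<Longrightarrow> 0 \<le> K x * (\<phi> x - \<kappa>)"
        using hAp Kpos by (metis UnI1 diff_ge_0_iff_ge less_le mult_nonneg_nonneg)
      have "\<forall>a\<in>Ap. K a * (\<phi> a - \<kappa>) = 0"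
        using nn \<open>S = 0\<close> sum_nonneg_eq_0_iff[OF fin(1), of "\<lambda>a. K a * (\<phi> a - \<kappa>)"] hAp Kpos
        unfolding S_def by auto
      then show "\<phi> a = \<kappa>" using a Kpos by (metis UnI1 less_irrefl mult_eq_0_iff right_minus_eq)
    qed
    obtain b where b: "b \<in> Am" using ne by blast
    have eqB: "\<phi> b = \<kappa>"
    proof -
      have nn: "\<And>x. x \<in> Am \<Longrightarrow> 0 \<le> K x * (\<kappa> - \<phi> x)"
        using hAm Kpos by (metis UnI2 diff_ge_0_iff_ge less_le mult_nonneg_nonneg)
      have "\<forall>a\<in>Am. K a * (\<kappa> - \<phi> a) = 0"
        using nn \<open>T = 0\<close> sum_nonneg_eq_0_iff[OF fin(2), of "\<lambda>a. K a * (\<kappa> - \<phi> a)"] hAm Kpos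
        unfolding T_def by auto
      then show ?thesis using b Kpos by (metis UnI2 less_irrefl mult_eq_0_iff right_minus_eq)
    qed
    have hull: "\<forall>y\<in>convex hull Ap. \<phi> y \<le> \<kappa>"
      using convex_on_convex_hull_bound[of Ap \<phi> \<kappa>] phi_convex[of "convex hull Ap" u u0] eqA
      unfolding \<phi>_def by auto
    obtain e where e: "e > 0" "ball b e \<subseteq> convex hull Ap"
      using int b by (meson in_mono mem_interior)
    have nu: "norm u > 0" using u by simp
    define d where "d = e / (2 * norm u)"
    have d: "d > 0" using e nu unfolding d_def by simp
    have nd: "norm (d *\<^sub>R u) < e" using e nu unfolding d_def by simp
    have p1: "b + d *\<^sub>R u \<in> convex hull Ap" using e nd by (intro subsetD[OF e(2)]) (simp add: dist_norm)
    have p2: "b - d *\<^sub>R u \<in> convex hull Ap" using e nd by (intro subsetD[OF e(2)]) (simp add: dist_norm)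
    have uu: "u \<bullet> u > 0" using u by simp
    have "\<phi> (b + d *\<^sub>R u) + \<phi> (b - d *\<^sub>R u) = 2 * \<phi> b + 2 * d^2 * (u \<bullet> u)^2"
      unfolding \<phi>_def by (simp add: inner_add_right inner_diff_right algebra_simps power2_eq_square)
    moreover have "2 * d^2 * (u \<bullet> u)^2 > 0" using d uu by simp
    moreover have "\<phi> (b + d *\<^sub>R u) \<le> \<kappa>" "\<phi> (b - d *\<^sub>R u) \<le> \<kappa>" using hull p1 p2 by auto
    ultimately show False using eqB by linarith
  qed
qed


definition upd :: "real^'m \<Rightarrow> 'm \<Rightarrow> real \<Rightarrow> real^'m" where
  "upd x j s = (\<chi> k. if k = j then s else x $ k)"

lemma partial_upd: "partial f i x = deriv (\<lambda>s. f (upd x i s)) (x $ i)"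
  unfolding partial_def upd_def ..

lemma monom_pos: "(\<forall>i. x $ i > 0) \<Longrightarrow> monom x a > 0"
  unfolding monom_def by (intro prod_pos) (metis less_irrefl powr_gt_zero)

lemma monom_upd_deriv:
  assumes x: "\<forall>i. x $ i > 0"
  shows "((\<lambda>s. monom (upd x j s) a) has_real_derivative (a$j * monom x a / x$j)) (at (x$j))"
proof -
  define R where "R = (\<Prod>k\<in>UNIV - {j}. x $ k powr a $ k)"
  have eq: "monom (upd x j s) a = s powr (a$j) * R" for s
  proof -
    have "monom (upd x j s) a = (upd x j s $ j) powr (a$j) * (\<Prod>k\<in>UNIV - {j}. upd x j s $ k powr a $ k)"
      unfolding monom_def by (simp add: prod.remove)
    also have "(\<Prod>k\<in>UNIV - {j}. upd x j s $ k powr a $ k) = R"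
      unfolding R_def upd_def by (intro prod.cong) auto
    finally show ?thesis by (simp add: upd_def)
  qed
  have m: "monom x a = x$j powr (a$j) * R"
    unfolding monom_def R_def by (simp add: prod.remove)
  have xj: "x $ j > 0" using x by simp
  have "((\<lambda>s. s powr (a$j) * R) has_real_derivative (a$j * x$j powr (a$j - 1)) * R) (at (x$j))"
    by (intro DERIV_cmult_right has_real_derivative_powr xj)
  moreover have "a$j * x$j powr (a$j - 1) * R = a$j * monom x a / x$j"
    unfolding m using xj by (simp add: powr_diff)
  ultimately show ?thesis unfolding eq by simp
qed

lemma sum_monom_deriv:
  assumes "finite S" "\<forall>i. x $ i > 0"
  shows "((\<lambda>s. \<Sum>a\<in>S. e a * monom (upd x j s) a) has_real_derivative
           (\<Sum>a\<in>S. e a * (a$j * monom x a / x$j))) (at (x$j))"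
  by (intro DERIV_sum DERIV_cmult monom_upd_deriv assms)

definition dsig :: "(real^'n) set \<Rightarrow> (real^'n) set \<Rightarrow> (real^'n \<Rightarrow> real) \<Rightarrow> real^'n \<Rightarrow> 'n \<Rightarrow> real" where
  "dsig Ap Am c x i = (\<Sum>a\<in>Ap. c a * (a$i * monom x a)) - (\<Sum>b\<in>Am. c b * (b$i * monom x b))"

lemma partial_fsig:
  assumes "finite Ap" "finite Am" "\<forall>i. x $ i > 0"
  shows "partial (fsig Ap Am c) j x = dsig Ap Am c x j / x $ j"
proof -
  have "((\<lambda>s. fsig Ap Am c (upd x j s)) has_real_derivative
     (\<Sum>a\<in>Ap. c a * (a$j * monom x a / x$j)) - (\<Sum>a\<in>Am. c a * (a$j * monom x a / x$j))) (at (x$j))"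
    unfolding fsig_def by (intro DERIV_diff sum_monom_deriv assms)
  then have "partial (fsig Ap Am c) j x =
     (\<Sum>a\<in>Ap. c a * (a$j * monom x a / x$j)) - (\<Sum>a\<in>Am. c a * (a$j * monom x a / x$j))"
    unfolding partial_upd by (rule DERIV_imp_deriv)
  also have "\<dots> = dsig Ap Am c x j / x $ j"
    unfolding dsig_def by (simp add: sum_divide_distrib diff_divide_distrib)
  finally show ?thesis .
qed

lemma crit_some:
  assumes "finite Ap" "finite Am" "\<forall>i. x $ i > 0"
  shows "crit_sys Ap Am c x $ Some i = dsig Ap Am c x i"
  using partial_fsig[OF assms, of c i] assms(3) by (simp add: crit_sys_def) (metis less_irrefl)

definition xp :: "real^('n option) \<Rightarrow> real^'n" where "xp q = (\<chi> i. q $ Some i)"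

lemma G_none: "Gsys Ap Am c h q $ None = fsig Ap Am (\<lambda>a. c a * (q $ None) powi (h a)) (xp q)"
  by (simp add: Gsys_def crit_sys_def xp_def)

lemma G_some: "finite Ap \<Longrightarrow> finite Am \<Longrightarrow> \<forall>i. q $ Some i > 0 \<Longrightarrow>
   Gsys Ap Am c h q $ Some i = dsig Ap Am (\<lambda>a. c a * (q $ None) powi (h a)) (xp q) i"
  unfolding Gsys_def xp_def[symmetric] by (rule crit_some) (auto simp: xp_def)

lemma xp_upd: "xp (upd p (Some j) s) = upd (xp p) j s"
  by (simp add: xp_def upd_def vec_eq_iff)

lemma upd_none: "upd p (Some j) s $ None = p $ None"
  by (simp add: upd_def)

lemma xp_upd_none: "xp (upd p None s) = xp p"
  by (simp add: xp_def upd_def vec_eq_iff)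

lemma upd_none_none: "upd p None s $ None = s"
  by (simp add: upd_def)

lemma sum_option: "sum f (UNIV :: 'a::finite option set) = f None + (\<Sum>j\<in>UNIV. f (Some j))"
  unfolding UNIV_option_conv by (simp add: sum.reindex)


lemma powi_sum_deriv:
  fixes h :: "real^'n \<Rightarrow> int"
  assumes "finite S" "\<forall>a\<in>S. h a \<ge> 0"
  shows "((\<lambda>s. \<Sum>a\<in>S. c a * s powi h a * m a) has_real_derivative
          (\<Sum>a\<in>S. c a * (real (nat (h a)) * t ^ (nat (h a) - Suc 0)) * m a)) (at t)"
proof -
  have eq: "(\<lambda>s. \<Sum>a\<in>S. c a * s powi h a * m a) = (\<lambda>s. \<Sum>a\<in>S. c a * s ^ nat (h a) * m a)"
    using assms(2) by (intro ext sum.cong) (auto simp: power_int_def)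
  show ?thesis unfolding eq
    by (intro DERIV_sum DERIV_cmult DERIV_cmult_right DERIV_pow)
qed

lemma dsig_alt: "dsig Ap Am C y i = (\<Sum>a\<in>Ap. (C a * a$i) * monom y a) - (\<Sum>a\<in>Am. (C a * a$i) * monom y a)"
  by (simp add: dsig_def mult.assoc)

lemma upd_pos: "\<forall>k. p $ k > (0::real) \<Longrightarrow> s > 0 \<Longrightarrow> \<forall>i. upd p l s $ i > 0"
  by (simp add: upd_def)

lemma J_entries:
  fixes Ap Am :: "(real^'n) set" and c :: "real^'n \<Rightarrow> real" and h :: "real^'n \<Rightarrow> int"
    and p :: "real^('n option)"
  assumes fin: "finite Ap" "finite Am" and pos: "\<forall>k. p $ k > 0"
  defines "C \<equiv> (\<lambda>a. c a * (p $ None) powi (h a))" and "x \<equiv> xp p"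
  shows "jacobian_mat (Gsys Ap Am c h) p $ None $ Some j = dsig Ap Am C x j / x $ j"
    and "jacobian_mat (Gsys Ap Am c h) p $ Some i $ Some j =
          (\<Sum>a\<in>Ap. (C a * a$i) * (a$j * monom x a / x$j)) - (\<Sum>a\<in>Am. (C a * a$i) * (a$j * monom x a / x$j))"
proof -
  have xpos: "\<forall>i. x $ i > 0" using pos by (simp add: x_def xp_def)
  have pj: "p $ Some j = x $ j" by (simp add: x_def xp_def)
  show "jacobian_mat (Gsys Ap Am c h) p $ None $ Some j = dsig Ap Am C x j / x $ j"
  proof -
    have "jacobian_mat (Gsys Ap Am c h) p $ None $ Some j
        = deriv (\<lambda>s. fsig Ap Am C (upd x j s)) (x $ j)"
      unfolding jacobian_mat_def partial_upd
      by (simp add: G_none xp_upd upd_none C_def x_def pj)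
    also have "\<dots> = partial (fsig Ap Am C) j x" unfolding partial_upd ..
    also have "\<dots> = dsig Ap Am C x j / x $ j" by (rule partial_fsig[OF fin xpos])
    finally show ?thesis .
  qed
  have ev: "eventually (\<lambda>s. Gsys Ap Am c h (upd p (Some j) s) $ Some i
             = dsig Ap Am C (upd x j s) i) (nhds (x $ j))"
  proof -
    have "eventually (\<lambda>s. s \<in> {0<..}) (nhds (x $ j))"
      using xpos by (intro eventually_nhds_in_open) auto
    then show ?thesis
    proof (rule eventually_mono)
      fix s :: real assume "s \<in> {0<..}"
      then have "\<forall>i. upd p (Some j) s $ Some i > 0" using upd_pos[OF pos] by simp
      then show "Gsys Ap Am c h (upd p (Some j) s) $ Some i = dsig Ap Am C (upd x j s) i"
        by (simp add: G_some[OF fin] xp_upd upd_none C_def x_def)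
    qed
  qed
  have d: "((\<lambda>s. dsig Ap Am C (upd x j s) i) has_real_derivative
     (\<Sum>a\<in>Ap. (C a * a$i) * (a$j * monom x a / x$j)) - (\<Sum>a\<in>Am. (C a * a$i) * (a$j * monom x a / x$j))) (at (x$j))"
    unfolding dsig_alt by (intro DERIV_diff sum_monom_deriv fin xpos)
  have d2: "((\<lambda>s. Gsys Ap Am c h (upd p (Some j) s) $ Some i) has_real_derivative
     (\<Sum>a\<in>Ap. (C a * a$i) * (a$j * monom x a / x$j)) - (\<Sum>a\<in>Am. (C a * a$i) * (a$j * monom x a / x$j))) (at (x$j))"
    using d by (subst DERIV_cong_ev[OF refl ev refl])
  show "jacobian_mat (Gsys Ap Am c h) p $ Some i $ Some j =
          (\<Sum>a\<in>Ap. (C a * a$i) * (a$j * monom x a / x$j)) - (\<Sum>a\<in>Am. (C a * a$i) * (a$j * monom x a / x$j))"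
    unfolding jacobian_mat_def partial_upd using DERIV_imp_deriv[OF d2] by (simp add: pj)
qed

lemma J_none_none:
  fixes Ap Am :: "(real^'n) set" and c :: "real^'n \<Rightarrow> real" and h :: "real^'n \<Rightarrow> int"
    and p :: "real^('n option)"
  assumes fin: "finite Ap" "finite Am" and hA: "\<forall>a\<in>Ap. h a = 0" and hB: "\<forall>a\<in>Am. h a > 0"
  shows "jacobian_mat (Gsys Ap Am c h) p $ None $ None =
     - (\<Sum>a\<in>Am. c a * (real (nat (h a)) * (p$None) ^ (nat (h a) - Suc 0)) * monom (xp p) a)"
proof -
  have d: "((\<lambda>s. fsig Ap Am (\<lambda>a. c a * s powi h a) (xp p)) has_real_derivative
     (\<Sum>a\<in>Ap. c a * (real (nat (h a)) * (p$None) ^ (nat (h a) - Suc 0)) * monom (xp p) a)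
    - (\<Sum>a\<in>Am. c a * (real (nat (h a)) * (p$None) ^ (nat (h a) - Suc 0)) * monom (xp p) a)) (at (p $ None))"
    unfolding fsig_def using hA hB by (intro DERIV_diff powi_sum_deriv fin) auto
  have z: "(\<Sum>a\<in>Ap. c a * (real (nat (h a)) * (p$None) ^ (nat (h a) - Suc 0)) * monom (xp p) a) = 0"
    using hA by simp
  show ?thesis
    unfolding jacobian_mat_def partial_upd
    using DERIV_imp_deriv[OF d] z by (simp add: G_none xp_upd_none upd_none_none)
qed


lemma vec_sum_nth: "(\<Sum>a\<in>S. (K a :: real) *\<^sub>R (a :: real^'n)) $ i = (\<Sum>a\<in>S. K a * a$i)"
  by (induct S rule: infinite_finite_induct) auto

lemma inner_real_vec: "(a :: real^'n) \<bullet> w = (\<Sum>j\<in>UNIV. a$j * w$j)"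
  by (simp add: inner_vec_def)

lemma quad_sum:
  fixes w :: "real^'n"
  shows "(\<Sum>i\<in>UNIV. w$i * (\<Sum>a\<in>S. K a * a$i * (a \<bullet> w))) = (\<Sum>a\<in>S. K a * (w \<bullet> a)^2)"
proof -
  have "(\<Sum>i\<in>UNIV. w$i * (\<Sum>a\<in>S. K a * a$i * (a \<bullet> w))) = (\<Sum>a\<in>S. \<Sum>i\<in>UNIV. w$i * (K a * a$i * (a \<bullet> w)))"
    by (simp add: sum_distrib_left sum.swap[of _ UNIV S])
  also have "\<dots> = (\<Sum>a\<in>S. K a * (a \<bullet> w) * (\<Sum>i\<in>UNIV. a$i * w$i))"
    by (intro sum.cong refl) (simp add: sum_distrib_left algebra_simps)
  also have "\<dots> = (\<Sum>a\<in>S. K a * (w \<bullet> a)^2)"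
    by (intro sum.cong refl) (simp add: inner_real_vec[symmetric] inner_commute power2_eq_square)
  finally show ?thesis .
qed

lemma row_sum:
  fixes x w :: "real^'n" and v :: "'n \<Rightarrow> real"
  assumes "\<forall>j. x$j > 0" and "w = (\<chi> j. v j / x$j)"
  shows "(\<Sum>j\<in>UNIV. ((\<Sum>a\<in>S. (C a * a$i) * (a$j * monom x a / x$j)) - (\<Sum>a\<in>T. (C a * a$i) * (a$j * monom x a / x$j))) * v j)
    = (\<Sum>a\<in>S. (C a * monom x a) * a$i * (a \<bullet> w)) - (\<Sum>a\<in>T. (C a * monom x a) * a$i * (a \<bullet> w))"
proof -
  have e: "(C a * a$i) * (a$j * monom x a / x$j) * v j = (C a * monom x a) * a$i * (a$j * w$j)" for a j
    using assms by (simp add: field_simps)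
  show ?thesis
    unfolding left_diff_distrib sum_distrib_right sum_subtractf e
    by (simp add: sum.swap[of _ UNIV] inner_real_vec sum_distrib_left)
qed


theorem proposition4p4:
  fixes Ap Am :: "(real^'n) set" and c :: "real^'n \<Rightarrow> real" and h :: "real^'n \<Rightarrow> int"
    and p :: "real^('n option)"
  assumes "finite Ap" and "finite Am" and "Ap \<inter> Am = {}"
    and "int_points Ap" and "int_points Am"
    and "full_dimensional Ap Am" and "nonseparable Ap Am"
    and "\<forall>a\<in>Ap \<union> Am. c a > 0"
    and "lifts Ap Am h"
    and "\<forall>k. p $ k > 0"
    and "Gsys Ap Am c h p = 0"
  shows "det (jacobian_mat (Gsys Ap Am c h) p) \<noteq> 0"
proof -
  note fin = assms(1,2)
  note pos = assms(10)
  define t where "t = p $ None"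
  define x where "x = xp p"
  define C where "C = (\<lambda>a. c a * (p $ None) powi (h a))"
  define K where "K = (\<lambda>a. C a * monom x a)"
  define J where "J = jacobian_mat (Gsys Ap Am c h) p"
  have t: "t > 0" using pos t_def by simp
  have xpos: "\<forall>i. x $ i > 0" using pos by (simp add: x_def xp_def)
  have hA: "\<forall>a\<in>Ap. h a = 0" and hB: "\<forall>a\<in>Am. h a > 0" using assms(9) unfolding lifts_def by auto
  have Kpos: "\<forall>a\<in>Ap \<union> Am. K a > 0"
    using assms(8) t monom_pos[OF xpos] unfolding K_def C_def t_def by (auto intro!: mult_pos_pos zero_less_power_int)
  have G0: "fsig Ap Am C x = 0" using assms(11) G_none[of Ap Am c h p] by (simp add: C_def x_def)
  have Gi: "dsig Ap Am C x i = 0" for i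
    using assms(11) G_some[OF fin, of p c h i] pos by (simp add: C_def x_def)
  have sK: "sum K Ap = sum K Am" using G0 unfolding fsig_def K_def by simp
  have sV: "(\<Sum>a\<in>Ap. K a *\<^sub>R a) = (\<Sum>b\<in>Am. K b *\<^sub>R b)"
  proof (rule iffD2[OF vec_eq_iff], rule allI)
    fix i
    have "(\<Sum>a\<in>Ap. K a * a$i) = (\<Sum>a\<in>Am. K a * a$i)"
      using Gi[of i] unfolding dsig_def K_def by (simp add: algebra_simps)
    then show "(\<Sum>a\<in>Ap. K a *\<^sub>R a) $ i = (\<Sum>b\<in>Am. K b *\<^sub>R b) $ i" by (simp add: vec_sum_nth)
  qed
  have ne: "Am \<noteq> {}"
  proof
    assume "Am = {}"
    then have "sum K Ap = 0" using sK by simp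
    then have "Ap = {}" using Kpos fin(1) sum_pos[of Ap K] by fastforce
    then show False using assms(6) \<open>Am = {}\<close> unfolding full_dimensional_def by simp
  qed
  have int: "Am \<subseteq> interior (convex hull Ap)"
  proof -
    have sub: "Am \<subseteq> rel_interior (convex hull Ap)" using assms(7) unfolding nonseparable_def by blast
    have "convex hull (Ap \<union> Am) \<subseteq> convex hull Ap"
      using sub rel_interior_subset hull_subset[of Ap convex]
      by (intro hull_minimal) (auto simp: convex_convex_hull)
    then have "aff_dim (convex hull (Ap \<union> Am)) \<le> aff_dim (convex hull Ap)" by (rule aff_dim_subset)
    moreover have "aff_dim (convex hull Ap) \<le> int DIM(real^'n)" by (rule aff_dim_le_DIM)
    ultimately have "aff_dim (convex hull Ap) = int DIM(real^'n)"
      using assms(6) unfolding full_dimensional_def by simp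
    then have "affine hull (convex hull Ap) = UNIV" using aff_dim_eq_full by blast
    then show ?thesis using sub rel_interior_interior by blast
  qed
  have JNS: "J $ None $ Some j = 0" for j
    unfolding J_def using J_entries(1)[OF fin pos, of c h j] Gi[of j] by (simp add: C_def x_def)
  have JSS: "J $ Some i $ Some j =
          (\<Sum>a\<in>Ap. (C a * a$i) * (a$j * monom x a / x$j)) - (\<Sum>a\<in>Am. (C a * a$i) * (a$j * monom x a / x$j))" for i j
    unfolding J_def using J_entries(2)[OF fin pos, of c h i j] by (simp add: C_def x_def)
  have JNN: "J $ None $ None < 0"
  proof -
    have "(\<Sum>a\<in>Am. c a * (real (nat (h a)) * t ^ (nat (h a) - Suc 0)) * monom x a) > 0"
      using ne fin(2) hB assms(8) t monom_pos[OF xpos]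
      by (intro sum_pos) (auto intro!: mult_pos_pos)
    then show ?thesis unfolding J_def J_none_none[OF fin hA hB] t_def x_def by simp
  qed
  show ?thesis
    unfolding J_def[symmetric]
  proof (rule det_nz_of_ker)
    fix v assume v: "J *v v = 0"
    have r0: "(J *v v) $ None = J $ None $ None * v $ None"
      by (simp add: matrix_vector_mult_def sum_option JNS)
    have vN: "v $ None = 0" using r0 v JNN by simp
    define w where "w = (\<chi> j. v $ Some j / x$j)"
    have ri: "(\<Sum>a\<in>Ap. K a * a$i * (a \<bullet> w)) - (\<Sum>a\<in>Am. K a * a$i * (a \<bullet> w)) = 0" for i
    proof -
      have "(J *v v) $ Some i = (\<Sum>j\<in>UNIV. J $ Some i $ Some j * v $ Some j)"
        by (simp add: matrix_vector_mult_def sum_option vN)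
      also have "\<dots> = (\<Sum>a\<in>Ap. K a * a$i * (a \<bullet> w)) - (\<Sum>a\<in>Am. K a * a$i * (a \<bullet> w))"
        unfolding JSS K_def by (rule row_sum[OF xpos]) (simp add: w_def)
      finally show ?thesis using v by simp
    qed
    have "(\<Sum>i\<in>UNIV. w$i * ((\<Sum>a\<in>Ap. K a * a$i * (a \<bullet> w)) - (\<Sum>a\<in>Am. K a * a$i * (a \<bullet> w)))) = 0"
      using ri by simp
    then have "(\<Sum>a\<in>Ap. K a * (w \<bullet> a)^2) - (\<Sum>a\<in>Am. K a * (w \<bullet> a)^2) = 0"
      by (simp add: right_diff_distrib sum_subtractf quad_sum)
    then have w0: "w = 0"
      using quad_pos[OF fin ne Kpos sK sV int assms(7), of w] by (cases "w = 0") auto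
    have "v $ Some j = 0" for j
    proof -
      have "v $ Some j / x $ j = 0" using w0 unfolding w_def by (metis vec_lambda_beta zero_index)
      then show ?thesis using xpos by (metis divide_eq_0_iff less_irrefl)
    qed
    then show "v = 0" using vN by (metis not_Some_eq vec_eq_iff zero_index)
  qed
qed

end
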